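(* Let $(X, A, \rightarrow)$ be a labelled transition system with finite state set $X$ and a distinguished silent action $\tau \in A$. For all $x, y \in X$: $x \mathrel{\#_b} y$ (i.e. $x$ and $y$ are branching apart) if and only if the configuration $[x,y]$ is winning for Spoiler in the branching bisimulation game.
   Context: Write $x \Longrightarrow x'$ if there is a (possibly empty) sequence of $\tau$-transitions from $x$ to $x'$, and $x \xrightarrow{(\alpha)} x'$ if either $x \xrightarrow{\alpha} x'$, or $\alpha = \tau$ and $x = x'$. A branching apartness relation is a symmetric relation $R \subseteq X \times X$ such that whenever $x \xrightarrow{\alpha} x'$ and for all $y', y''$ with $y \Longrightarrow y' \xrightarrow{(\alpha)} y''$ we have $x \mathrel R y'$ or $x' \mathrel R y''$, then $x \mathrel R y$. States are branching apart, $x \mathrel{\#_b} y$, iff they are related by every branching apartness relation. Branching bisimulation game: Spoiler configurations are $[x,y] \in X^2$ and $[x,x',y,y',y''] \in X^5$; Duplicator configurations are $\langle x,\alpha,x',y\rangle \in X \times A \times X \times X$. Spoiler can move from $[x,y]$ to $\langle x,\alpha,x',y\rangle$ if $x \xrightarrow{\alpha} x'$, and to $\langle y,\alpha,y',x\rangle$ if $y \xrightarrow{\alpha} y'$; and from $[x,x',y,y',y'']$ to $[x,y']$ or to $[x',y'']$. Duplicator can move from $\langle x,\alpha,x',y\rangle$ to $[x,x',y,y',y'']$ if $y \Longrightarrow y' \xrightarrow{(\alpha)} y''$. A play from $[x,y]$ is a finite or infinite sequence of configurations starting at $[x,y]$, each next one a move from the previous; it is maximal if infinite or no move is possible from its last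 configuration. Spoiler wins a finite maximal play iff its last configuration is a Duplicator configuration; all other maximal plays are won by Duplicator. A (positional) Spoiler strategy maps each Spoiler configuration to a Spoiler move from it; a play is consistent with it if all Spoiler moves in the play follow the strategy. $[x,y]$ is winning for Spoiler if there is a Spoiler strategy such that every maximal play from $[x,y]$ consistent with it is won by Spoiler. *)

theory Defs
  imports Main
begin

text \<open>The state set is the type 'x; finiteness is assumed in the theorem.\<close>

definition tau_steps :: "('x \<Rightarrow> 'a \<Rightarrow> 'x \<Rightarrow> bool) \<Rightarrow> 'a \<Rightarrow> 'x \<Rightarrow> 'x \<Rightarrow> bool" where
  "tau_steps step tau = (\<lambda>x y. step x tau y)\<^sup>*\<^sup>*"

definition opt_step :: "('x \<Rightarrow> 'a \<Rightarrow> 'x \<Rightarrow> bool) \<Rightarrow> 'a \<Rightarrow> 'x \<Rightarrow> 'a \<Rightarrow> 'x \<Rightarrow> bool" where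
  "opt_step step tau x a x' \<longleftrightarrow> step x a x' \<or> (a = tau \<and> x = x')"

definition branching_apartness :: "('x \<Rightarrow> 'a \<Rightarrow> 'x \<Rightarrow> bool) \<Rightarrow> 'a \<Rightarrow> ('x \<Rightarrow> 'x \<Rightarrow> bool) \<Rightarrow> bool" where
  "branching_apartness step tau R \<longleftrightarrow>
     symp R \<and>
     (\<forall>x y a x'. step x a x' \<and>
        (\<forall>y' y''. tau_steps step tau y y' \<and> opt_step step tau y' a y'' \<longrightarrow> R x y' \<or> R x' y'')
        \<longrightarrow> R x y)"

definition branching_apart :: "('x \<Rightarrow> 'a \<Rightarrow> 'x \<Rightarrow> bool) \<Rightarrow> 'a \<Rightarrow> 'x \<Rightarrow> 'x \<Rightarrow> bool" where
  "branching_apart step tau x y \<longleftrightarrow> (\<forall>R. branching_apartness step tau R \<longrightarrow> R x y)"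

datatype ('x, 'a) conf =
    SP2 'x 'x                 (* [x,y] *)
  | SP5 'x 'x 'x 'x 'x
  | DUP 'x 'a 'x 'x

fun spoiler_conf :: "('x, 'a) conf \<Rightarrow> bool" where
  "spoiler_conf (DUP _ _ _ _) = False"
| "spoiler_conf _ = True"

fun game_move :: "('x \<Rightarrow> 'a \<Rightarrow> 'x \<Rightarrow> bool) \<Rightarrow> 'a \<Rightarrow> ('x, 'a) conf \<Rightarrow> ('x, 'a) conf \<Rightarrow> bool" where
  "game_move step tau (SP2 x y) c' \<longleftrightarrow>
     (\<exists>a x'. step x a x' \<and> c' = DUP x a x' y) \<or> (\<exists>a y'. step y a y' \<and> c' = DUP y a y' x)"
| "game_move step tau (SP5 x x' y y' y'') c' \<longleftrightarrow> c' = SP2 x y' \<or> c' = SP2 x' y''"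
| "game_move step tau (DUP x a x' y) c' \<longleftrightarrow>
     (\<exists>y' y''. tau_steps step tau y y' \<and> opt_step step tau y' a y'' \<and> c' = SP5 x x' y y' y'')"

definition spoiler_strategy :: "('x \<Rightarrow> 'a \<Rightarrow> 'x \<Rightarrow> bool) \<Rightarrow> 'a \<Rightarrow> (('x, 'a) conf \<Rightarrow> ('x, 'a) conf) \<Rightarrow> bool" where
  "spoiler_strategy step tau \<sigma> \<longleftrightarrow>
     (\<forall>c. spoiler_conf c \<and> (\<exists>c'. game_move step tau c c') \<longrightarrow> game_move step tau c (\<sigma> c))"

definition consistent_step :: "('x \<Rightarrow> 'a \<Rightarrow> 'x \<Rightarrow> bool) \<Rightarrow> 'a \<Rightarrow> (('x, 'a) conf \<Rightarrow> ('x, 'a) conf)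
    \<Rightarrow> ('x, 'a) conf \<Rightarrow> ('x, 'a) conf \<Rightarrow> bool" where
  "consistent_step step tau \<sigma> c c' \<longleftrightarrow> game_move step tau c c' \<and> (spoiler_conf c \<longrightarrow> c' = \<sigma> c)"

definition spoiler_wins_from ::
  "('x \<Rightarrow> 'a \<Rightarrow> 'x \<Rightarrow> bool) \<Rightarrow> 'a \<Rightarrow> (('x, 'a) conf \<Rightarrow> ('x, 'a) conf) \<Rightarrow> ('x, 'a) conf \<Rightarrow> bool" where
  "spoiler_wins_from step tau \<sigma> c0 \<longleftrightarrow>
     \<comment> \<open>every finite maximal consistent play is won by Spoiler\<close>
     (\<forall>p. p \<noteq> [] \<and> hd p = c0
          \<and> (\<forall>i. Suc i < length p \<longrightarrow> consistent_step step tau \<sigma> (p ! i) (p ! Suc i))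
          \<and> (\<nexists>c'. game_move step tau (last p) c')
          \<longrightarrow> \<not> spoiler_conf (last p))
     \<and> \<comment> \<open>there is no infinite consistent play (those are won by Duplicator)\<close>
     (\<nexists>f. f 0 = c0 \<and> (\<forall>i. consistent_step step tau \<sigma> (f i) (f (Suc i))))"

definition spoiler_winning :: "('x \<Rightarrow> 'a \<Rightarrow> 'x \<Rightarrow> bool) \<Rightarrow> 'a \<Rightarrow> ('x, 'a) conf \<Rightarrow> bool" where
  "spoiler_winning step tau c \<longleftrightarrow>
     (\<exists>\<sigma>. spoiler_strategy step tau \<sigma> \<and> spoiler_wins_from step tau \<sigma> c)"

end

theory Submission
  imports Defs
begin

lemma fin_bound:
  fixes P :: "nat \<Rightarrow> 'b \<Rightarrow> bool"
  assumes "finite S" "\<forall>s\<in>S. \<exists>n. P n s" "\<And>n m s. P n s \<Longrightarrow> n \<le> m \<Longrightarrow> P m s"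
  shows "\<exists>N. \<forall>s\<in>S. P N s"
  using assms(1,2)
proof (induction S rule: finite_induct)
  case empty
  then show ?case by simp
next
  case (insert s F)
  then obtain N where N: "\<forall>t\<in>F. P N t" by blast
  from insert obtain n where n: "P n s" by blast
  show ?case
  proof (intro exI ballI)
    fix t assume t: "t \<in> insert s F"
    show "P (max N n) t"
    proof (cases "t = s")
      case True
      then show ?thesis using assms(3)[OF n, of "max N n"] by (simp add: True)
    next
      case False
      with t N have "P N t" by blast
      then show ?thesis using assms(3)[of N t "max N n"] by simp
    qed
  qed
qed

context
  fixes step :: "'x \<Rightarrow> 'a \<Rightarrow> 'x \<Rightarrow> bool" and tau :: 'a
begin

fun att :: "nat \<Rightarrow> ('x, 'a) conf \<Rightarrow> bool" where
  "att 0 c = False"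
| "att (Suc n) c = (if spoiler_conf c then (\<exists>c'. game_move step tau c c' \<and> att n c')
     else (\<forall>c'. game_move step tau c c' \<longrightarrow> att n c'))"

lemma att_Suc_eq: "att (Suc n) c = (if spoiler_conf c then (\<exists>c'. game_move step tau c c' \<and> att n c')
     else (\<forall>c'. game_move step tau c c' \<longrightarrow> att n c'))"
  by (rule att.simps(2))

lemma att_Suc: "att n c \<Longrightarrow> att (Suc n) c"
proof (induction n arbitrary: c)
  case 0 then show ?case by simp
next
  case (Suc n)
  show ?case
  proof (cases "spoiler_conf c")
    case True
    with Suc.prems obtain c' where c': "game_move step tau c c'" "att n c'"
      unfolding att_Suc_eq by (simp only: if_True) blast
    from Suc.IH[OF c'(2)] c'(1) True show ?thesis
      unfolding att_Suc_eq[of "Suc n"] by (simp only: if_True) blast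
  next
    case False
    from Suc.prems False have h: "\<forall>c'. game_move step tau c c' \<longrightarrow> att n c'"
      unfolding att_Suc_eq by (simp only: if_False)
    from h Suc.IH False show ?thesis
      unfolding att_Suc_eq[of "Suc n"] by (simp only: if_False) blast
  qed
qed

lemma att_mono: assumes "att n c" "n \<le> m" shows "att m c"
  using assms(2,1) by (induction m rule: dec_induct) (auto intro: att_Suc simp del: att.simps)

lemma att_SP2: "att (Suc n) (SP2 x y) = (\<exists>c'. game_move step tau (SP2 x y) c' \<and> att n c')"
  by simp

lemma att_DUP: "att (Suc n) (DUP x a x' y) = (\<forall>c'. game_move step tau (DUP x a x' y) c' \<longrightarrow> att n c')"
  by simp

definition sig :: "('x, 'a) conf \<Rightarrow> ('x, 'a) conf" where
  "sig c = (if \<exists>k c'. game_move step tau c c' \<and> att k c'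
     then SOME c'. game_move step tau c c' \<and> att (LEAST k. \<exists>c'. game_move step tau c c' \<and> att k c') c'
     else SOME c'. game_move step tau c c')"

lemma sig_strategy: "spoiler_strategy step tau sig"
  unfolding spoiler_strategy_def
proof (intro allI impI)
  fix c assume h: "spoiler_conf c \<and> (\<exists>c'. game_move step tau c c')"
  show "game_move step tau c (sig c)"
  proof (cases "\<exists>k c'. game_move step tau c c' \<and> att k c'")
    case True
    have "\<exists>c'. game_move step tau c c' \<and> att (LEAST k. \<exists>c'. game_move step tau c c' \<and> att k c') c'"
      using True by (rule LeastI_ex)
    from someI_ex[OF this] True show ?thesis unfolding sig_def by simp
  next
    case False
    have "sig c = (SOME c'. game_move step tau c c')" unfolding sig_def by (rule if_not_P[OF False])
    with someI_ex[of "game_move step tau c"] h show ?thesis by simp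
  qed
qed

lemma sig_dec:
  assumes "att (Suc m) c" "consistent_step step tau sig c c'"
  shows "att m c'"
proof (cases "spoiler_conf c")
  case True
  with assms have c': "c' = sig c" unfolding consistent_step_def by auto
  from assms(1) True obtain c1 where c1: "game_move step tau c c1" "att m c1" by auto
  hence ex: "\<exists>k c'. game_move step tau c c' \<and> att k c'" by blast
  define K where "K = (LEAST k. \<exists>c'. game_move step tau c c' \<and> att k c')"
  have Km: "K \<le> m" unfolding K_def using c1 by (intro Least_le) blast
  have "\<exists>c'. game_move step tau c c' \<and> att K c'"
    unfolding K_def using ex by (rule LeastI_ex)
  from someI_ex[OF this] have "att K (sig c)" using ex unfolding sig_def K_def by simp
  with Km c' show ?thesis using att_mono by blast
next
  case False
  with assms show ?thesis unfolding consistent_step_def by auto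
qed

lemma sig_wins:
  assumes "att n c"
  shows "spoiler_wins_from step tau sig c"
  unfolding spoiler_wins_from_def
proof (intro conjI allI impI notI)
  fix p
  assume h: "p \<noteq> [] \<and> hd p = c \<and>
         (\<forall>i. Suc i < length p \<longrightarrow> consistent_step step tau sig (p ! i) (p ! Suc i)) \<and>
         (\<nexists>c'. game_move step tau (last p) c')"
  assume sp: "spoiler_conf (last p)"
  have inv: "i < length p \<Longrightarrow> att (n - i) (p ! i)" for i
  proof (induction i)
    case 0 then show ?case using h assms by (metis hd_conv_nth minus_nat.diff_0)
  next
    case (Suc i)
    then have a: "att (n - i) (p ! i)" by simp
    then obtain m where m: "n - i = Suc m" by (cases "n - i") auto
    from Suc.prems h have "consistent_step step tau sig (p ! i) (p ! Suc i)" by blast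
    with a m sig_dec have "att m (p ! Suc i)" by auto
    moreover have "n - Suc i = m" using m by simp
    ultimately show ?case by simp
  qed
  have "att (n - (length p - 1)) (last p)"
    using inv[of "length p - 1"] h by (simp add: last_conv_nth)
  then obtain k where "att k (last p)" by blast
  then show False using sp h by (cases k) auto
next
  assume "\<exists>f. f 0 = c \<and> (\<forall>i. consistent_step step tau sig (f i) (f (Suc i)))"
  then obtain f where h: "f 0 = c \<and> (\<forall>i. consistent_step step tau sig (f i) (f (Suc i)))" by blast
  have "i \<le> n \<Longrightarrow> att (n - i) (f i)" for i
  proof (induction i)
    case 0 then show ?case using h assms by simp
  next
    case (Suc i)
    then have a: "att (n - i) (f i)" by simp
    then obtain m where m: "n - i = Suc m" by (cases "n - i") auto
    with a h sig_dec have "att m (f (Suc i))" by auto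
    moreover have "n - Suc i = m" using m by simp
    ultimately show ?case by simp
  qed
  from this[of n] show False by simp
qed

lemma key_step:
  assumes fin: "finite (UNIV :: 'x set)" and st: "spoiler_strategy step tau \<sigma>"
    and B: "\<not> (\<exists>n. att n c)"
  shows "(spoiler_conf c \<and> \<not> (\<exists>c'. game_move step tau c c'))
     \<or> (\<exists>c'. consistent_step step tau \<sigma> c c' \<and> \<not> (\<exists>n. att n c'))"
proof (cases "spoiler_conf c")
  case True
  show ?thesis
  proof (cases "\<exists>c'. game_move step tau c c'")
    case True2: True
    with True st have mv: "game_move step tau c (\<sigma> c)" unfolding spoiler_strategy_def by blast
    have "\<not> (\<exists>n. att n (\<sigma> c))"
    proof
      assume "\<exists>n. att n (\<sigma> c)"
      then obtain n where "att n (\<sigma> c)" by blast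
      with mv True have "att (Suc n) c" by auto
      with B show False by blast
    qed
    with mv True show ?thesis unfolding consistent_step_def by blast
  next
    case False
    with True show ?thesis by blast
  qed
next
  case False
  then obtain x a x' y where c: "c = DUP x a x' y" by (cases c) auto
  have finp: "finite (UNIV :: ('x \<times> 'x) set)" using fin by (simp add: finite_Prod_UNIV)
  show ?thesis
  proof (rule ccontr)
    assume nc: "\<not> ?thesis"
    have allg: "\<forall>s\<in>UNIV. \<exists>n. (\<lambda>n (y', y''). tau_steps step tau y y' \<and> opt_step step tau y' a y''
        \<longrightarrow> att n (SP5 x x' y y' y'')) n s"
    proof
      fix s :: "'x \<times> 'x"
      obtain y' y'' where s: "s = (y', y'')" by (cases s)
      show "\<exists>n. (\<lambda>n (y', y''). tau_steps step tau y y' \<and> opt_step step tau y' a y''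
        \<longrightarrow> att n (SP5 x x' y y' y'')) n s"
      proof (cases "tau_steps step tau y y' \<and> opt_step step tau y' a y''")
        case True
        hence "game_move step tau c (SP5 x x' y y' y'')" unfolding c game_move.simps by blast
        hence "consistent_step step tau \<sigma> c (SP5 x x' y y' y'')"
          using False unfolding consistent_step_def by simp
        with nc obtain n where "att n (SP5 x x' y y' y'')" by blast
        then show ?thesis using s by (intro exI[of _ n]) (simp del: att.simps)
      next
        case False
        then show ?thesis unfolding s by (intro exI[of _ 0]) (simp; blast)
      qed
    qed
    have mono: "(\<lambda>n (y', y''). tau_steps step tau y y' \<and> opt_step step tau y' a y''
        \<longrightarrow> att n (SP5 x x' y y' y'')) m s" if "(\<lambda>n (y', y''). tau_steps step tau y y' \<and> opt_step step tau y' a y''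
        \<longrightarrow> att n (SP5 x x' y y' y'')) n s" "n \<le> m" for n m s
      using that att_mono[of n _ m] by (cases s) (simp del: att.simps; blast)
    have "\<exists>N. \<forall>s\<in>UNIV. (\<lambda>n (y', y''). tau_steps step tau y y' \<and> opt_step step tau y' a y''
        \<longrightarrow> att n (SP5 x x' y y' y'')) N s"
      by (rule fin_bound[OF finp allg mono])
    then obtain N where N0: "\<forall>s\<in>UNIV. (\<lambda>n (y', y''). tau_steps step tau y y' \<and> opt_step step tau y' a y''
        \<longrightarrow> att n (SP5 x x' y y' y'')) N s" by blast
    have N: "att N (SP5 x x' y y' y'')" if "tau_steps step tau y y' \<and> opt_step step tau y' a y''" for y' y''
      using N0[rule_format, of "(y', y'')"] that by simp
    have "\<forall>c'. game_move step tau c c' \<longrightarrow> att N c'" using N unfolding c game_move.simps by blast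
    then have "att (Suc N) c" unfolding c att_DUP by blast
    with B show False by blast
  qed
qed

lemma win_att:
  assumes fin: "finite (UNIV :: 'x set)" and st: "spoiler_strategy step tau \<sigma>"
    and w: "spoiler_wins_from step tau \<sigma> c"
  shows "\<exists>n. att n c"
proof (rule ccontr)
  assume B0: "\<not> (\<exists>n. att n c)"
  define B where "B = (\<lambda>c. \<not> (\<exists>n. att n c))"
  define good where "good = (\<lambda>c. \<exists>c'. consistent_step step tau \<sigma> c c' \<and> B c')"
  define nxt where "nxt = (\<lambda>c. SOME c'. consistent_step step tau \<sigma> c c' \<and> B c')"
  define f where "f = (\<lambda>i. (nxt ^^ i) c)"
  have fS: "f (Suc i) = nxt (f i)" for i unfolding f_def by simp
  have gstep: "good (f i) \<Longrightarrow> consistent_step step tau \<sigma> (f i) (f (Suc i)) \<and> B (f (Suc i))" for i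
    unfolding fS nxt_def good_def by (rule someI_ex) (simp add: good_def)
  show False
  proof (cases "\<forall>i. good (f i)")
    case True
    hence "f 0 = c \<and> (\<forall>i. consistent_step step tau \<sigma> (f i) (f (Suc i)))"
      using gstep by (simp add: f_def)
    with w show False unfolding spoiler_wins_from_def by blast
  next
    case False
    define i where "i = (LEAST i. \<not> good (f i))"
    have ni: "\<not> good (f i)" unfolding i_def using False by (metis LeastI_ex)
    have gj: "j < i \<Longrightarrow> good (f j)" for j unfolding i_def using not_less_Least by blast
    have Bi: "B (f i)"
    proof (cases i)
      case 0 then show ?thesis using B0 by (simp add: f_def B_def)
    next
      case (Suc k)
      then show ?thesis using gstep[of k] gj[of k] by simp
    qed
    from key_step[OF fin st] Bi ni have stuck:
      "spoiler_conf (f i) \<and> \<not> (\<exists>c'. game_move step tau (f i) c')"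
      unfolding B_def good_def by blast
    define p where "p = map f [0..<Suc i]"
    have "p \<noteq> []" unfolding p_def by simp
    have "hd p = c" unfolding p_def f_def by (simp add: hd_map upt_conv_Cons del: upt_Suc)
    have "last p = f i" unfolding p_def by simp
    note \<open>p \<noteq> []\<close> \<open>hd p = c\<close> \<open>last p = f i\<close>
    moreover have "\<forall>j. Suc j < length p \<longrightarrow> consistent_step step tau \<sigma> (p ! j) (p ! Suc j)"
    proof (intro allI impI)
      fix j assume "Suc j < length p"
      hence "j < i" unfolding p_def by simp
      with gj gstep have "consistent_step step tau \<sigma> (f j) (f (Suc j))" by blast
      then show "consistent_step step tau \<sigma> (p ! j) (p ! Suc j)"
        unfolding p_def using \<open>j < i\<close> by (simp del: upt_Suc)
    qed
    ultimately show False using w stuck unfolding spoiler_wins_from_def by metis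
  qed
qed

lemma att_SP2_sym: assumes "att n (SP2 x y)" shows "att n (SP2 y x)"
proof (cases n)
  case 0 then show ?thesis using assms by simp
next
  case (Suc m)
  have "(\<exists>c'. game_move step tau (SP2 x y) c' \<and> att m c')" using assms Suc by simp
  then have "(\<exists>c'. game_move step tau (SP2 y x) c' \<and> att m c')" unfolding game_move.simps by blast
  then show ?thesis using Suc by simp
qed

lemma ba_att:
  assumes fin: "finite (UNIV :: 'x set)" and ba: "branching_apart step tau x y"
  shows "\<exists>n. att n (SP2 x y)"
proof -
  let ?A = "\<lambda>x y. \<exists>n. att n (SP2 x y)"
  have finp: "finite (UNIV :: ('x \<times> 'x) set)" using fin by (simp add: finite_Prod_UNIV)
  have "branching_apartness step tau ?A"
    unfolding branching_apartness_def
  proof (intro conjI allI impI)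
    show "symp ?A" unfolding symp_def using att_SP2_sym by blast
  next
    fix x y a x'
    assume h: "step x a x' \<and> (\<forall>y' y''. tau_steps step tau y y' \<and> opt_step step tau y' a y''
       \<longrightarrow> ?A x y' \<or> ?A x' y'')"
    let ?P = "\<lambda>n (y', y''). tau_steps step tau y y' \<and> opt_step step tau y' a y''
        \<longrightarrow> att n (SP2 x y') \<or> att n (SP2 x' y'')"
    have allg: "\<forall>s\<in>UNIV. \<exists>n. ?P n s"
    proof
      fix s :: "'x \<times> 'x"
      obtain y' y'' where s: "s = (y', y'')" by (cases s)
      show "\<exists>n. ?P n s" using h unfolding s by (simp del: att.simps; blast)
    qed
    have mono: "?P m s" if "?P n s" "n \<le> m" for n m s
      using that att_mono[of n _ m] by (cases s) (simp del: att.simps; blast)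
    have "\<exists>N. \<forall>s\<in>UNIV. ?P N s"
      by (rule fin_bound[OF finp allg mono])
    then obtain N where N0: "\<forall>s\<in>UNIV. ?P N s" by blast
    have N: "att N (SP2 x y') \<or> att N (SP2 x' y'')" if "tau_steps step tau y y' \<and> opt_step step tau y' a y''" for y' y''
      using N0[rule_format, of "(y', y'')"] that by simp
    have N5: "att (Suc N) (SP5 x x' y y' y'')" if "tau_steps step tau y y' \<and> opt_step step tau y' a y''" for y' y''
      using N[OF that] by (simp; blast)
    have "att (Suc (Suc N)) (DUP x a x' y)" unfolding att_DUP game_move.simps using N5 by blast
    then have "att (Suc (Suc (Suc N))) (SP2 x y)" using h unfolding att_SP2 game_move.simps by blast
    then show "?A x y" by blast
  qed
  with ba show ?thesis unfolding branching_apart_def by blast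
qed

lemma att_ba:
  assumes R: "branching_apartness step tau R"
  shows "att n (SP2 x y) \<Longrightarrow> R x y"
proof (induction n arbitrary: x y)
  case 0 then show ?case by simp
next
  case (Suc n)
  have cl: "\<And>x y a x'. step x a x' \<Longrightarrow>
        (\<And>y' y''. tau_steps step tau y y' \<Longrightarrow> opt_step step tau y' a y'' \<Longrightarrow> R x y' \<or> R x' y'')
        \<Longrightarrow> R x y" using R unfolding branching_apartness_def by blast
  have sy: "symp R" using R unfolding branching_apartness_def by blast
  have side: "R u v" if st: "step u a u'" and d: "att n (DUP u a u' v)" for u v a u'
  proof (rule cl[OF st])
    fix y' y'' assume t: "tau_steps step tau v y'" "opt_step step tau y' a y''"
    from d obtain m where m: "n = Suc m" by (cases n) auto
    with d t have "att m (SP5 u u' v y' y'')" by auto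
    then obtain k where k: "m = Suc k" by (cases m) auto
    with \<open>att m (SP5 u u' v y' y'')\<close> have "att k (SP2 u y') \<or> att k (SP2 u' y'')" by auto
    moreover have kn: "k \<le> n" using m k by simp
    ultimately have "att n (SP2 u y') \<or> att n (SP2 u' y'')" using att_mono[OF _ kn] by blast
    then show "R u y' \<or> R u' y''" using Suc.IH by blast
  qed
  from Suc.prems have "(\<exists>a x'. step x a x' \<and> att n (DUP x a x' y)) \<or> (\<exists>a y'. step y a y' \<and> att n (DUP y a y' x))"
    unfolding att_SP2 game_move.simps by blast
  then show ?case
  proof
    assume "\<exists>a x'. step x a x' \<and> att n (DUP x a x' y)"
    then show ?thesis using side by blast
  next
    assume "\<exists>a y'. step y a y' \<and> att n (DUP y a y' x)"
    then have "R y x" using side by blast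
    then show ?thesis using sy by (meson sympD)
  qed
qed

end

theorem theorem4:
  fixes step :: "'x \<Rightarrow> 'a \<Rightarrow> 'x \<Rightarrow> bool" and tau :: 'a and x y :: 'x
  assumes "finite (UNIV :: 'x set)"
  shows "branching_apart step tau x y \<longleftrightarrow> spoiler_winning step tau (SP2 x y)"
proof
  assume "branching_apart step tau x y"
  then obtain n where an: "att step tau n (SP2 x y)" using ba_att[of step tau x y] assms by blast
  have w: "spoiler_wins_from step tau (sig step tau) (SP2 x y)" by (rule sig_wins[OF an])
  show "spoiler_winning step tau (SP2 x y)"
    unfolding spoiler_winning_def by (intro exI[of _ "sig step tau"] conjI sig_strategy w)
next
  assume "spoiler_winning step tau (SP2 x y)"
  then obtain \<sigma> where "spoiler_strategy step tau \<sigma>" "spoiler_wins_from step tau \<sigma> (SP2 x y)"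
    unfolding spoiler_winning_def by blast
  then obtain n where an: "att step tau n (SP2 x y)" using win_att[of step tau \<sigma> "SP2 x y"] assms by blast
  show "branching_apart step tau x y"
    unfolding branching_apart_def
  proof (intro allI impI)
    fix R assume "branching_apartness step tau R"
    then show "R x y" by (rule att_ba[OF _ an])
  qed
qed

end
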